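(* Let $R$ be an $\mathbb{N}$-graded domain finitely generated over the field $R_0$, and let $M\neq0$ be a finitely generated $\mathbb{Z}$-graded $R$-module. Then not every element of $M$ is almost zero.
   Context: $R^{+\mathrm{GR}}$ is the maximal $\mathbb{Q}_{\ge0}$-graded subring of the absolute integral closure $R^+$ (integral closure of $R$ in an algebraic closure of its fraction field) extending the grading of $R$; $\nu(a)$ is the degree of the lowest nonzero homogeneous component of $a\in R^{+\mathrm{GR}}$. An element $m\in M$ is almost zero if for every $\varepsilon>0$ the element $m\otimes1\in M\otimes_R R^{+\mathrm{GR}}$ is annihilated by some nonzero $a\in R^{+\mathrm{GR}}$ with $\nu(a)<\varepsilon$. *)

theory Defs
  imports Main "HOL-Computational_Algebra.Polynomial" "HOL-Library.Poly_Mapping"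
begin

definition subring_of :: "'a::comm_ring_1 set \<Rightarrow> bool" where
  "subring_of A \<longleftrightarrow> 0 \<in> A \<and> 1 \<in> A \<and> (\<forall>x\<in>A. \<forall>y\<in>A. x + y \<in> A \<and> x * y \<in> A \<and> - x \<in> A)"

inductive_set ring_gen :: "'a::comm_ring_1 set \<Rightarrow> 'a set" for X where
  gen: "x \<in> X \<Longrightarrow> x \<in> ring_gen X"
| zero: "0 \<in> ring_gen X"
| one: "1 \<in> ring_gen X"
| add: "x \<in> ring_gen X \<Longrightarrow> y \<in> ring_gen X \<Longrightarrow> x + y \<in> ring_gen X"
| neg: "x \<in> ring_gen X \<Longrightarrow> - x \<in> ring_gen X"
| mult: "x \<in> ring_gen X \<Longrightarrow> y \<in> ring_gen X \<Longrightarrow> x * y \<in> ring_gen X"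

definition is_decomp :: "'i set \<Rightarrow> ('i \<Rightarrow> 'b set) \<Rightarrow> 'b::comm_monoid_add \<Rightarrow> ('i \<Rightarrow> 'b) \<Rightarrow> bool" where
  "is_decomp I G x f \<longleftrightarrow> finite {i. f i \<noteq> 0} \<and> (\<forall>i. f i \<noteq> 0 \<longrightarrow> i \<in> I)
     \<and> (\<forall>i\<in>I. f i \<in> G i) \<and> x = (\<Sum>i\<in>{i. f i \<noteq> 0}. f i)"

definition direct_sum_decomp :: "'i set \<Rightarrow> ('i \<Rightarrow> 'b::ab_group_add set) \<Rightarrow> 'b set \<Rightarrow> bool" where
  "direct_sum_decomp I G A \<longleftrightarrow>
     (\<forall>i\<in>I. G i \<subseteq> A \<and> 0 \<in> G i \<and> (\<forall>x\<in>G i. \<forall>y\<in>G i. x + y \<in> G i \<and> - x \<in> G i))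
     \<and> (\<forall>x\<in>A. \<exists>f. is_decomp I G x f)
     \<and> (\<forall>x f g. is_decomp I G x f \<and> is_decomp I G x g \<longrightarrow> f = g)"

definition graded_subring :: "'i::comm_monoid_add set \<Rightarrow> 'a::comm_ring_1 set \<Rightarrow> ('i \<Rightarrow> 'a set) \<Rightarrow> bool" where
  "graded_subring I A G \<longleftrightarrow> subring_of A \<and> direct_sum_decomp I G A \<and> 1 \<in> G 0
     \<and> (\<forall>i\<in>I. \<forall>j\<in>I. \<forall>x\<in>G i. \<forall>y\<in>G j. x * y \<in> G (i + j))"

definition fg_graded_domain :: "'a::field set \<Rightarrow> (nat \<Rightarrow> 'a set) \<Rightarrow> bool" where
  "fg_graded_domain R Rg \<longleftrightarrow> graded_subring UNIV R Rg
     \<and> (\<forall>x\<in>Rg 0. x \<noteq> 0 \<longrightarrow> inverse x \<in> Rg 0)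
     \<and> (\<exists>X. finite X \<and> X \<subseteq> R \<and> R = ring_gen (Rg 0 \<union> X))"

text \<open>The ambient field 'a is an algebraic closure of the fraction field of R.\<close>
definition is_alg_closure_of_frac :: "'a::field set \<Rightarrow> bool" where
  "is_alg_closure_of_frac R \<longleftrightarrow>
     (\<forall>p::'a poly. degree p \<ge> 1 \<longrightarrow> (\<exists>x. poly p x = 0))
     \<and> (\<forall>x::'a. \<exists>p. p \<noteq> 0 \<and> (\<forall>i. coeff p i \<in> R) \<and> poly p x = 0)"

definition abs_int_closure :: "'a::field set \<Rightarrow> 'a set" where
  "abs_int_closure R = {x. \<exists>p. lead_coeff p = 1 \<and> (\<forall>i. coeff p i \<in> R) \<and> poly p x = 0}"

definition qgraded_ext :: "'a::field set \<Rightarrow> (nat \<Rightarrow> 'a set) \<Rightarrow> 'a set \<Rightarrow> (rat \<Rightarrow> 'a set) \<Rightarrow> bool" where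
  "qgraded_ext R Rg S Sg \<longleftrightarrow> graded_subring {q. q \<ge> 0} S Sg \<and> S \<subseteq> abs_int_closure R
     \<and> (\<forall>n. Rg n \<subseteq> Sg (of_nat n))"

definition is_RplusGR :: "'a::field set \<Rightarrow> (nat \<Rightarrow> 'a set) \<Rightarrow> 'a set \<Rightarrow> (rat \<Rightarrow> 'a set) \<Rightarrow> bool" where
  "is_RplusGR R Rg S Sg \<longleftrightarrow> qgraded_ext R Rg S Sg
     \<and> (\<forall>T Tg. qgraded_ext R Rg T Tg \<and> S \<subseteq> T \<and> (\<forall>q\<ge>0. Sg q \<subseteq> Tg q) \<longrightarrow> T = S)"

definition nu :: "(rat \<Rightarrow> 'a::field set) \<Rightarrow> 'a \<Rightarrow> rat" where
  "nu Sg a = Min {q. q \<ge> 0 \<and> (THE f. is_decomp {q. q \<ge> 0} Sg a f) q \<noteq> 0}"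

definition is_module :: "'a::comm_ring_1 set \<Rightarrow> ('a \<Rightarrow> 'm::ab_group_add \<Rightarrow> 'm) \<Rightarrow> bool" where
  "is_module R act \<longleftrightarrow> (\<forall>r\<in>R. \<forall>s\<in>R. \<forall>x y.
      act r (x + y) = act r x + act r y \<and> act (r + s) x = act r x + act s x
      \<and> act (r * s) x = act r (act s x) \<and> act 1 x = x)"

definition fg_module :: "'a::comm_ring_1 set \<Rightarrow> ('a \<Rightarrow> 'm::ab_group_add \<Rightarrow> 'm) \<Rightarrow> bool" where
  "fg_module R act \<longleftrightarrow> is_module R act
     \<and> (\<exists>G. finite G \<and> (\<forall>x. \<exists>c. (\<forall>g\<in>G. c g \<in> R) \<and> x = (\<Sum>g\<in>G. act (c g) g)))"

definition Zgraded_module :: "(nat \<Rightarrow> 'a::comm_ring_1 set) \<Rightarrow> ('a \<Rightarrow> 'm::ab_group_add \<Rightarrow> 'm) \<Rightarrow> (int \<Rightarrow> 'm set) \<Rightarrow> bool" where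
  "Zgraded_module Rg act Mg \<longleftrightarrow> direct_sum_decomp UNIV Mg UNIV
     \<and> (\<forall>i j. \<forall>r\<in>Rg i. \<forall>x\<in>Mg j. act r x \<in> Mg (int i + j))"

text \<open>The subgroup of relations; m \<otimes> s = 0 iff single (m,s) 1 lies in it.\<close>
inductive_set tensor_rel :: "'a::comm_ring_1 set \<Rightarrow> 'a set \<Rightarrow> ('a \<Rightarrow> 'm::ab_group_add \<Rightarrow> 'm) \<Rightarrow> (('m \<times> 'a) \<Rightarrow>\<^sub>0 int) set"
  for R S act where
  zero: "0 \<in> tensor_rel R S act"
| add: "u \<in> tensor_rel R S act \<Longrightarrow> v \<in> tensor_rel R S act \<Longrightarrow> u + v \<in> tensor_rel R S act"
| neg: "u \<in> tensor_rel R S act \<Longrightarrow> - u \<in> tensor_rel R S act"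
| addl: "s \<in> S \<Longrightarrow> Poly_Mapping.single (x + y, s) 1 - Poly_Mapping.single (x, s) 1
           - Poly_Mapping.single (y, s) 1 \<in> tensor_rel R S act"
| addr: "s \<in> S \<Longrightarrow> t \<in> S \<Longrightarrow> Poly_Mapping.single (x, s + t) 1 - Poly_Mapping.single (x, s) 1
           - Poly_Mapping.single (x, t) 1 \<in> tensor_rel R S act"
| scal: "r \<in> R \<Longrightarrow> s \<in> S \<Longrightarrow> Poly_Mapping.single (act r x, s) 1
           - Poly_Mapping.single (x, r * s) 1 \<in> tensor_rel R S act"

definition almost_zero :: "'a::field set \<Rightarrow> 'a set \<Rightarrow> (rat \<Rightarrow> 'a set) \<Rightarrow> ('a \<Rightarrow> 'm::ab_group_add \<Rightarrow> 'm) \<Rightarrow> 'm \<Rightarrow> bool" where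
  "almost_zero R S Sg act m \<longleftrightarrow> (\<forall>\<epsilon>::rat. \<epsilon> > 0 \<longrightarrow>
     (\<exists>a\<in>S. a \<noteq> 0 \<and> nu Sg a < \<epsilon> \<and> Poly_Mapping.single (m, a) 1 \<in> tensor_rel R S act))"

end

theory Submission
  imports Defs
begin


definition dec :: "'i set \<Rightarrow> ('i \<Rightarrow> 'b set) \<Rightarrow> 'b::comm_monoid_add \<Rightarrow> 'i \<Rightarrow> 'b" where
  "dec I G x = (THE f. is_decomp I G x f)"

lemma dec_eq:
  assumes "direct_sum_decomp I G A" "is_decomp I G x f"
  shows "dec I G x = f"
  unfolding dec_def using assms unfolding direct_sum_decomp_def by (metis the_equality)

lemma dec_is:
  assumes "direct_sum_decomp I G A" "x \<in> A"
  shows "is_decomp I G x (dec I G x)"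
  using assms dec_eq unfolding direct_sum_decomp_def by metis

lemma sum_supp_eq:
  fixes h :: "'i \<Rightarrow> 'b::comm_monoid_add"
  assumes "finite U" "{i. h i \<noteq> 0} \<subseteq> U"
  shows "(\<Sum>i\<in>{i. h i \<noteq> 0}. h i) = (\<Sum>i\<in>U. h i)"
  using assms by (intro sum.mono_neutral_left) auto

lemma decomp_add:
  fixes G :: "'i \<Rightarrow> 'b::ab_group_add set"
  assumes "direct_sum_decomp I G A" "is_decomp I G x f" "is_decomp I G y g"
  shows "is_decomp I G (x + y) (\<lambda>i. f i + g i)"
proof -
  let ?U = "{i. f i \<noteq> 0} \<union> {i. g i \<noteq> 0}"
  have fU: "finite ?U" using assms(2,3) unfolding is_decomp_def by auto
  have sub: "{i. f i + g i \<noteq> 0} \<subseteq> ?U" by auto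
  have ex: "x = (\<Sum>i\<in>{i. f i \<noteq> 0}. f i)" "y = (\<Sum>i\<in>{i. g i \<noteq> 0}. g i)"
    using assms(2,3) unfolding is_decomp_def by auto
  have "x + y = (\<Sum>i\<in>?U. f i) + (\<Sum>i\<in>?U. g i)"
    unfolding ex by (subst sum_supp_eq[OF fU], blast)+ (rule refl)
  also have "\<dots> = (\<Sum>i\<in>?U. f i + g i)" by (simp add: sum.distrib)
  also have "\<dots> = (\<Sum>i\<in>{i. f i + g i \<noteq> 0}. f i + g i)"
    using sum_supp_eq[OF fU sub] by simp
  finally show ?thesis
    using assms fU sub unfolding is_decomp_def direct_sum_decomp_def
    by (auto intro: finite_subset)
qed

lemma decomp_zero:
  assumes "direct_sum_decomp I G A"
  shows "is_decomp I G 0 (\<lambda>_. 0)"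
  using assms unfolding is_decomp_def direct_sum_decomp_def by auto

lemma decomp_single:
  assumes "direct_sum_decomp I G A" "i \<in> I" "y \<in> G i"
  shows "is_decomp I G y (\<lambda>j. if j = i then y else 0)"
proof -
  have "{j. (if j = i then y else 0) \<noteq> 0} = (if y = 0 then {} else {i})" by auto
  then show ?thesis using assms unfolding is_decomp_def direct_sum_decomp_def by auto
qed

lemma decomp_sum:
  fixes G :: "'i \<Rightarrow> 'b::ab_group_add set"
  assumes "direct_sum_decomp I G A" "finite F" "\<And>a. a \<in> F \<Longrightarrow> is_decomp I G (x a) (f a)"
  shows "is_decomp I G (\<Sum>a\<in>F. x a) (\<lambda>i. \<Sum>a\<in>F. f a i)"
  using assms(2,3)
proof (induction F rule: finite_induct)
  case empty then show ?case using decomp_zero[OF assms(1)] by simp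
next
  case (insert a F)
  then show ?case using decomp_add[OF assms(1), of "x a" "f a" "sum x F" "\<lambda>i. \<Sum>a\<in>F. f a i"]
    by simp
qed

lemma decomp_shift:
  fixes G :: "'i::ab_group_add \<Rightarrow> 'b::ab_group_add set"
  assumes ds: "direct_sum_decomp I G A" and d: "is_decomp I G x f"
    and hadd: "\<And>u v. h (u + v) = h u + h v"
    and hG: "\<And>j y. j \<in> I \<Longrightarrow> y \<in> G j \<Longrightarrow> h y \<in> G (j + c)"
    and cI: "\<And>j. j \<in> I \<Longrightarrow> j + c \<in> I"
  shows "is_decomp I G (h x) (\<lambda>p. h (f (p - c)))"
proof -
  have h0: "h 0 = 0" using hadd[of 0 0] by simp
  have hs: "\<And>F (g::'i \<Rightarrow> 'b). h (sum g F) = (\<Sum>a\<in>F. h (g a))"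
  proof -
    fix F and g :: "'i \<Rightarrow> 'b"
    show "h (sum g F) = (\<Sum>a\<in>F. h (g a))"
      by (induction F rule: infinite_finite_induct) (auto simp: h0 hadd)
  qed
  let ?F = "{j. f j \<noteq> 0}"
  have fF: "finite ?F" using d unfolding is_decomp_def by auto
  have sub: "{p. h (f (p - c)) \<noteq> 0} \<subseteq> (\<lambda>j. j + c) ` ?F"
  proof
    fix p assume "p \<in> {p. h (f (p - c)) \<noteq> 0}"
    then have "f (p - c) \<noteq> 0" using h0 by auto
    then show "p \<in> (\<lambda>j. j + c) ` ?F" by (intro image_eqI[of _ _ "p - c"]) auto
  qed
  have "h x = (\<Sum>j\<in>?F. h (f j))" using d hs unfolding is_decomp_def by metis
  also have "\<dots> = (\<Sum>p\<in>(\<lambda>j. j + c) ` ?F. h (f (p - c)))"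
    by (subst sum.reindex) (auto simp: inj_on_def)
  also have "\<dots> = (\<Sum>p\<in>{p. h (f (p - c)) \<noteq> 0}. h (f (p - c)))"
    using sub fF by (intro sum.mono_neutral_right) auto
  finally have eq: "h x = (\<Sum>p\<in>{p. h (f (p - c)) \<noteq> 0}. h (f (p - c)))" .
  have fin: "finite {p. h (f (p - c)) \<noteq> 0}" using sub fF finite_subset by blast
  have mem: "\<forall>p. h (f (p - c)) \<noteq> 0 \<longrightarrow> p \<in> I"
  proof (intro allI impI)
    fix p assume "h (f (p - c)) \<noteq> 0"
    then have "f (p - c) \<noteq> 0" using h0 by auto
    then have "p - c \<in> I" using d unfolding is_decomp_def by auto
    then show "p \<in> I" using cI by fastforce
  qed
  have inG: "\<forall>p\<in>I. h (f (p - c)) \<in> G p"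
  proof
    fix p assume pI: "p \<in> I"
    show "h (f (p - c)) \<in> G p"
    proof (cases "f (p - c) = 0")
      case True then show ?thesis using h0 ds pI unfolding direct_sum_decomp_def by auto
    next
      case False
      then have "p - c \<in> I" "f (p - c) \<in> G (p - c)" using d unfolding is_decomp_def by auto
      then show ?thesis using hG by fastforce
    qed
  qed
  show ?thesis unfolding is_decomp_def using eq fin mem inG by blast
qed



locale setting =
  fixes R :: "'a::field set" and Rg :: "nat \<Rightarrow> 'a set"
    and S :: "'a set" and Sg :: "rat \<Rightarrow> 'a set"
    and act :: "'a \<Rightarrow> 'm::ab_group_add \<Rightarrow> 'm" and Mg :: "int \<Rightarrow> 'm set"
  assumes grR: "graded_subring UNIV R Rg"
    and fld: "\<forall>x\<in>Rg 0. x \<noteq> 0 \<longrightarrow> inverse x \<in> Rg 0"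
    and grS: "graded_subring {q. q \<ge> 0} S Sg"
    and RS: "\<forall>n. Rg n \<subseteq> Sg (of_nat n)"
    and modM: "is_module R act"
    and genM: "\<exists>G. finite G \<and> (\<forall>x. \<exists>c. (\<forall>g\<in>G. c g \<in> R) \<and> x = (\<Sum>g\<in>G. act (c g) g))"
    and grM: "Zgraded_module Rg act Mg"
    and nzM: "\<exists>m::'m. m \<noteq> 0"
begin

lemma subR: "subring_of R" using grR unfolding graded_subring_def by auto
lemma R0: "0 \<in> R" and R1: "1 \<in> R" using subR unfolding subring_of_def by auto
lemma Radd: "x \<in> R \<Longrightarrow> y \<in> R \<Longrightarrow> x + y \<in> R" using subR unfolding subring_of_def by auto
lemma Rmult: "x \<in> R \<Longrightarrow> y \<in> R \<Longrightarrow> x * y \<in> R" using subR unfolding subring_of_def by auto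
lemma Rneg: "x \<in> R \<Longrightarrow> - x \<in> R" using subR unfolding subring_of_def by auto

lemma act_addr: "r \<in> R \<Longrightarrow> act r (x + y) = act r x + act r y"
  using modM R0 unfolding is_module_def by blast
lemma act_addl: "r \<in> R \<Longrightarrow> s \<in> R \<Longrightarrow> act (r + s) x = act r x + act s x"
  using modM unfolding is_module_def by blast
lemma act_mult: "r \<in> R \<Longrightarrow> s \<in> R \<Longrightarrow> act (r * s) x = act r (act s x)"
  using modM unfolding is_module_def by blast
lemma act_one: "act 1 x = x"
  using modM R0 unfolding is_module_def by blast
lemma act_r0: "r \<in> R \<Longrightarrow> act r 0 = 0"
  using act_addr[of r 0 0] by simp
lemma act_0: "act 0 x = 0"
  using act_addl[OF R0 R0, of x] by simp
lemma act_negl: "r \<in> R \<Longrightarrow> act (- r) x = - act r x"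
proof -
  assume r: "r \<in> R"
  have "act r x + act (- r) x = 0" using act_addl[of r "-r" x] Rneg[OF r] act_0 r by simp
  then show ?thesis by (metis add.commute eq_neg_iff_add_eq_0)
qed
lemma act_diffl: "r \<in> R \<Longrightarrow> s \<in> R \<Longrightarrow> act (r - s) x = act r x - act s x"
  using act_addl[of r "-s" x] act_negl[of s x] Rneg by simp
lemma act_sumr: "r \<in> R \<Longrightarrow> act r (\<Sum>i\<in>F. x i) = (\<Sum>i\<in>F. act r (x i))"
  by (induction F rule: infinite_finite_induct) (auto simp: act_r0 act_addr)
lemma R_sum: "(\<And>i. i \<in> F \<Longrightarrow> c i \<in> R) \<Longrightarrow> sum c F \<in> R"
  by (induction F rule: infinite_finite_induct) (auto simp: R0 Radd)

lemma act_suml: "(\<And>i. i \<in> F \<Longrightarrow> c i \<in> R) \<Longrightarrow> act (\<Sum>i\<in>F. c i) x = (\<Sum>i\<in>F. act (c i) x)"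
proof (induction F rule: infinite_finite_induct)
  case (insert a F)
  have "sum c F \<in> R" using insert(4) R_sum[of F c] by blast
  then show ?case using insert by (simp add: act_addl)
qed (auto simp: act_0)

lemma dsR: "direct_sum_decomp UNIV Rg R" using grR unfolding graded_subring_def by auto
lemma dsS: "direct_sum_decomp {q. q \<ge> 0} Sg S" using grS unfolding graded_subring_def by auto
lemma dsM: "direct_sum_decomp UNIV Mg UNIV" using grM unfolding Zgraded_module_def by auto

lemma RgR: "Rg i \<subseteq> R" using dsR unfolding direct_sum_decomp_def by auto
lemma Rg0: "0 \<in> Rg i" using dsR unfolding direct_sum_decomp_def by auto
lemma Mg0: "0 \<in> Mg i" using dsM unfolding direct_sum_decomp_def by auto

abbreviation "rr r \<equiv> dec UNIV Rg r"
abbreviation "dM x \<equiv> dec UNIV Mg x"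
abbreviation "dS s \<equiv> dec {q. q \<ge> 0} Sg s"

lemma rr_is: "r \<in> R \<Longrightarrow> is_decomp UNIV Rg r (rr r)" using dec_is[OF dsR] .
lemma rr_in: "r \<in> R \<Longrightarrow> rr r i \<in> Rg i" using rr_is unfolding is_decomp_def by auto
lemma rr_R: "r \<in> R \<Longrightarrow> rr r i \<in> R" using rr_in RgR by auto
lemma rr_sum: "r \<in> R \<Longrightarrow> r = (\<Sum>i\<in>{i. rr r i \<noteq> 0}. rr r i)"
  using rr_is unfolding is_decomp_def by auto
lemma rr_fin: "r \<in> R \<Longrightarrow> finite {i. rr r i \<noteq> 0}"
  using rr_is unfolding is_decomp_def by auto

lemma dM_is: "is_decomp UNIV Mg x (dM x)" using dec_is[OF dsM] by simp
lemma dM_in: "dM x j \<in> Mg j" using dM_is unfolding is_decomp_def by auto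

lemma dM_act:
  assumes r: "r \<in> R"
  shows "dM (act r x) p = (\<Sum>i\<in>{i. rr r i \<noteq> 0}. act (rr r i) (dM x (p - int i)))"
proof -
  let ?F = "{i. rr r i \<noteq> 0}"
  have ax: "act r x = (\<Sum>i\<in>?F. act (rr r i) x)"
    using act_suml[of ?F "rr r" x] rr_sum[OF r] rr_R[OF r] by metis
  have each: "is_decomp UNIV Mg (act (rr r i) x) (\<lambda>p. act (rr r i) (dM x (p - int i)))" for i
  proof (rule decomp_shift[OF dsM dM_is])
    show "act (rr r i) (u + v) = act (rr r i) u + act (rr r i) v" for u v
      using act_addr rr_R[OF r] by blast
    show "act (rr r i) y \<in> Mg (j + int i)" if "y \<in> Mg j" for j y
      using grM rr_in[OF r, of i] that unfolding Zgraded_module_def by (simp add: add.commute)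
  qed auto
  have "is_decomp UNIV Mg (act r x) (\<lambda>p. \<Sum>i\<in>?F. act (rr r i) (dM x (p - int i)))"
    unfolding ax by (rule decomp_sum[OF dsM rr_fin[OF r] each])
  from fun_cong[OF dec_eq[OF dsM this]] show ?thesis by simp
qed

lemma dM_add: "dM (x + y) = (\<lambda>j. dM x j + dM y j)"
  using dec_eq[OF dsM decomp_add[OF dsM dM_is dM_is]] .

lemma dM_sum: "finite F \<Longrightarrow> dM (\<Sum>a\<in>F. x a) = (\<lambda>j. \<Sum>a\<in>F. dM (x a) j)"
  by (rule dec_eq[OF dsM decomp_sum[OF dsM _ dM_is]])

lemma dM_single: "y \<in> Mg j \<Longrightarrow> dM y j = y"
proof -
  assume "y \<in> Mg j"
  from fun_cong[OF dec_eq[OF dsM decomp_single[OF dsM UNIV_I this]], of j] show ?thesis by simp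
qed

end


context setting begin

definition "D = {j. \<exists>y\<in>Mg j. y \<noteq> 0}"

definition "Gn = (SOME G. finite G \<and> (\<forall>x. \<exists>c. (\<forall>g\<in>G. c g \<in> R) \<and> x = (\<Sum>g\<in>G. act (c g) g)))"

lemma Gn: "finite Gn" "\<exists>c. (\<forall>g\<in>Gn. c g \<in> R) \<and> x = (\<Sum>g\<in>Gn. act (c g) g)"
  using someI_ex[OF genM] unfolding Gn_def by auto

lemma decomp_nz: "x \<noteq> 0 \<Longrightarrow> \<exists>j. dM x j \<noteq> 0"
proof (rule ccontr)
  assume x: "x \<noteq> 0" and "\<not> (\<exists>j. dM x j \<noteq> 0)"
  then have "{i. dM x i \<noteq> 0} = {}" by auto
  then show False using dM_is[of x] x unfolding is_decomp_def by simp
qed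

lemma D_ne: "D \<noteq> {}"
proof -
  obtain m :: 'm where "m \<noteq> 0" using nzM by auto
  then obtain j where "dM m j \<noteq> 0" using decomp_nz by auto
  then have "j \<in> D" unfolding D_def using dM_in by auto
  then show ?thesis by auto
qed

lemma sum_zero_if: "(\<And>a. a \<in> F \<Longrightarrow> f a = 0) \<Longrightarrow> sum f F = 0" by simp

lemma D_bdd: "\<exists>L. \<forall>j\<in>D. L \<le> j"
proof -
  let ?U = "\<Union>g\<in>Gn. {j. dM g j \<noteq> 0}"
  have fU: "finite ?U" using Gn(1) dM_is unfolding is_decomp_def by auto
  define L where "L = Min (insert 0 ?U)"
  have Lle: "\<And>u. u \<in> ?U \<Longrightarrow> L \<le> u" unfolding L_def using fU by auto
  have "L \<le> j" if "j \<in> D" for j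
  proof (rule ccontr)
    assume "\<not> L \<le> j"
    then have jl: "j < L" by simp
    obtain y where y: "y \<in> Mg j" "y \<noteq> 0" using \<open>j \<in> D\<close> unfolding D_def by auto
    obtain c where c: "\<forall>g\<in>Gn. c g \<in> R" "y = (\<Sum>g\<in>Gn. act (c g) g)" using Gn(2) by blast
    have z: "dM g (j - int i) = 0" if "g \<in> Gn" for g i
    proof (rule ccontr)
      assume "dM g (j - int i) \<noteq> 0"
      then have "j - int i \<in> ?U" using that by auto
      then have "L \<le> j - int i" by (rule Lle)
      then show False using jl by simp
    qed
    have "y = dM y j" using dM_single[OF y(1)] by simp
    also have "\<dots> = (\<Sum>g\<in>Gn. dM (act (c g) g) j)"
      using c(2) dM_sum[OF Gn(1)] by metis
    also have "\<dots> = 0"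
      using dM_act c(1) z act_r0 rr_R by (simp add: sum_zero_if)
    finally show False using y(2) by simp
  qed
  then show ?thesis by blast
qed

lemma d_ex: "\<exists>d. d \<in> D \<and> (\<forall>j\<in>D. d \<le> j)"
proof -
  obtain L where L: "\<forall>j\<in>D. L \<le> j" using D_bdd by auto
  obtain j0 where j0: "j0 \<in> D" using D_ne by auto
  let ?A = "D \<inter> {L..j0}"
  have fA: "finite ?A" by auto
  have neA: "?A \<noteq> {}" using j0 L by auto
  show ?thesis
  proof (intro exI conjI ballI)
    show "Min ?A \<in> D" using Min_in[OF fA neA] by auto
    fix j assume "j \<in> D"
    show "Min ?A \<le> j"
    proof (cases "j \<le> j0")
      case True then have "j \<in> ?A" using \<open>j \<in> D\<close> L by auto
      then show ?thesis using fA by auto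
    next
      case False
      have "Min ?A \<le> j0" using fA j0 L by (intro Min_le) auto
      then show ?thesis using False by simp
    qed
  qed
qed

definition "d = (SOME d. d \<in> D \<and> (\<forall>j\<in>D. d \<le> j))"

lemma d: "d \<in> D" "\<And>j. j \<in> D \<Longrightarrow> d \<le> j"
  using someI_ex[OF d_ex] unfolding d_def by auto

lemma low: "j < d \<Longrightarrow> y \<in> Mg j \<Longrightarrow> y = 0"
  using d(2)[of j] unfolding D_def by force

lemma dM_act_d:
  assumes r: "r \<in> R"
  shows "dM (act r x) d = act (rr r 0) (dM x d)"
proof -
  let ?F = "{i. rr r i \<noteq> 0}"
  have "dM (act r x) d = (\<Sum>i\<in>?F. act (rr r i) (dM x (d - int i)))" by (rule dM_act[OF r])
  also have "\<dots> = (\<Sum>i\<in>?F. if i = 0 then act (rr r 0) (dM x d) else 0)"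
  proof (rule sum.cong[OF refl])
    fix i assume "i \<in> ?F"
    show "act (rr r i) (dM x (d - int i)) = (if i = 0 then act (rr r 0) (dM x d) else 0)"
    proof (cases "i = 0")
      case False
      then have "dM x (d - int i) = 0" using low[OF _ dM_in] by simp
      then show ?thesis using False act_r0 rr_R[OF r] by simp
    qed simp
  qed
  also have "\<dots> = act (rr r 0) (dM x d)"
    using act_0 by (auto simp: sum.delta[OF rr_fin[OF r]])
  finally show ?thesis .
qed

lemma k0: "0 \<in> Rg 0" using Rg0 .
lemma k1: "1 \<in> Rg 0" using grR unfolding graded_subring_def by auto
lemma kadd: "x \<in> Rg 0 \<Longrightarrow> y \<in> Rg 0 \<Longrightarrow> x + y \<in> Rg 0"
  using dsR unfolding direct_sum_decomp_def by auto
lemma kneg: "x \<in> Rg 0 \<Longrightarrow> - x \<in> Rg 0"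
  using dsR unfolding direct_sum_decomp_def by auto
lemma kdiff: "x \<in> Rg 0 \<Longrightarrow> y \<in> Rg 0 \<Longrightarrow> x - y \<in> Rg 0"
  using kadd[of x "-y"] kneg by simp
lemma kmult: "x \<in> Rg 0 \<Longrightarrow> y \<in> Rg 0 \<Longrightarrow> x * y \<in> Rg 0"
proof -
  assume "x \<in> Rg 0" "y \<in> Rg 0"
  moreover have "\<forall>i\<in>UNIV. \<forall>j\<in>UNIV. \<forall>x\<in>Rg i. \<forall>y\<in>Rg j. x * y \<in> Rg (i + j)"
    using grR unfolding graded_subring_def by blast
  ultimately show ?thesis by (metis UNIV_I add_0)
qed
lemma kinv: "x \<in> Rg 0 \<Longrightarrow> inverse x \<in> Rg 0"
  using fld k0 by (cases "x = 0") auto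
lemma kR: "x \<in> Rg 0 \<Longrightarrow> x \<in> R" using RgR by auto

lemma act_negr: "r \<in> R \<Longrightarrow> act r (- x) = - act r x"
  using act_addr[of r x "-x"] act_r0 by (simp add: eq_neg_iff_add_eq_0 add.commute)

abbreviation "e g \<equiv> dM g d"

definition "spanset J = {y. \<exists>c. (\<forall>g\<in>J. c g \<in> Rg 0) \<and> y = (\<Sum>g\<in>J. act (c g) (e g))}"

lemma spanning: "Mg d \<subseteq> spanset Gn"
proof
  fix y assume y: "y \<in> Mg d"
  obtain c where c: "\<forall>g\<in>Gn. c g \<in> R" "y = (\<Sum>g\<in>Gn. act (c g) g)" using Gn(2) by blast
  have "y = dM y d" using dM_single[OF y] by simp
  also have "\<dots> = (\<Sum>g\<in>Gn. dM (act (c g) g) d)"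
    using c(2) dM_sum[OF Gn(1)] by metis
  also have "\<dots> = (\<Sum>g\<in>Gn. act (rr (c g) 0) (e g))"
    using dM_act_d c(1) by simp
  finally have yy: "y = (\<Sum>g\<in>Gn. act (rr (c g) 0) (e g))" .
  have "\<forall>g\<in>Gn. rr (c g) 0 \<in> Rg 0" using rr_in c(1) by blast
  with yy show "y \<in> spanset Gn" unfolding spanset_def by (intro CollectI exI[of _ "\<lambda>g. rr (c g) 0"]) simp
qed

definition "PJ J \<longleftrightarrow> J \<subseteq> Gn \<and> Mg d \<subseteq> spanset J"

definition "J = (SOME J. PJ J \<and> (\<forall>J'. PJ J' \<longrightarrow> card J \<le> card J'))"

lemma J: "PJ J" "\<And>J'. PJ J' \<Longrightarrow> card J \<le> card J'"
proof -
  have "PJ Gn" unfolding PJ_def using spanning by auto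
  from ex_has_least_nat[of PJ Gn card, OF this]
  have "\<exists>J. PJ J \<and> (\<forall>J'. PJ J' \<longrightarrow> card J \<le> card J')" .
  from someI_ex[OF this] show "PJ J" "\<And>J'. PJ J' \<Longrightarrow> card J \<le> card J'"
    unfolding J_def by auto
qed

lemma J_fin: "finite J" using J(1) Gn(1) unfolding PJ_def by (auto intro: finite_subset)

lemma J_ne: "J \<noteq> {}"
proof
  assume "J = {}"
  then have "spanset J = {0}" unfolding spanset_def by auto
  moreover obtain y where "y \<in> Mg d" "y \<noteq> 0" using d(1) unfolding D_def by auto
  ultimately show False using J(1) unfolding PJ_def by auto
qed

definition "g0 = (SOME g. g \<in> J)"
lemma g0: "g0 \<in> J" using J_ne some_in_eq unfolding g0_def by blast

lemma indep:
  assumes c: "\<forall>g\<in>J. c g \<in> Rg 0" and z: "(\<Sum>g\<in>J. act (c g) (e g)) = 0"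
  shows "c g0 = 0"
proof (rule ccontr)
  assume nz: "c g0 \<noteq> 0"
  let ?J' = "J - {g0}"
  have split: "(\<Sum>g\<in>J. f g) = f g0 + (\<Sum>g\<in>?J'. f g)" for f :: "'m \<Rightarrow> 'm"
    using sum.remove[OF J_fin g0] by simp
  have sJ': "(\<Sum>g\<in>?J'. act (c g) (e g)) = - act (c g0) (e g0)"
    using z split[of "\<lambda>g. act (c g) (e g)"] by (simp add: eq_neg_iff_add_eq_0 add.commute)
  have "Mg d \<subseteq> spanset ?J'"
  proof
    fix y assume "y \<in> Mg d"
    then have "y \<in> spanset J" using J(1) unfolding PJ_def by auto
    then obtain a where a: "\<forall>g\<in>J. a g \<in> Rg 0" "y = (\<Sum>g\<in>J. act (a g) (e g))"
      unfolding spanset_def by auto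
    define t where "t = a g0 * inverse (c g0)"
    have tk: "t \<in> Rg 0" unfolding t_def using a(1) c g0 kmult kinv by auto
    have tc: "t * c g0 = a g0" unfolding t_def using nz by simp
    define a' where "a' g = a g - t * c g" for g
    have a'k: "\<forall>g\<in>?J'. a' g \<in> Rg 0" unfolding a'_def using a(1) c tk kdiff kmult by auto
    have "(\<Sum>g\<in>?J'. act (a' g) (e g)) = (\<Sum>g\<in>?J'. act (a g) (e g) - act t (act (c g) (e g)))"
      unfolding a'_def using a(1) c tk kR kmult
      by (intro sum.cong[OF refl]) (auto simp: act_diffl act_mult)
    also have "\<dots> = (\<Sum>g\<in>?J'. act (a g) (e g)) - act t (\<Sum>g\<in>?J'. act (c g) (e g))"
      using tk kR by (simp add: sum_subtractf act_sumr)
    also have "\<dots> = (\<Sum>g\<in>?J'. act (a g) (e g)) + act (a g0) (e g0)"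
      unfolding sJ' using tk kR c g0 tc by (simp add: act_negr act_mult[symmetric])
    also have "\<dots> = y" using a(2) split[of "\<lambda>g. act (a g) (e g)"] by (simp add: add.commute)
    finally have yy: "y = (\<Sum>g\<in>?J'. act (a' g) (e g))" by simp
    with a'k show "y \<in> spanset ?J'" unfolding spanset_def by (intro CollectI exI[of _ a']) simp
  qed
  then have "PJ ?J'" using J(1) unfolding PJ_def by auto
  from J(2)[OF this] have "card J \<le> card ?J'" .
  moreover have "card ?J' < card J" by (rule card_Diff1_less[OF J_fin g0])
  ultimately show False by simp
qed

definition "phi y = (SOME c. (\<forall>g\<in>J. c g \<in> Rg 0) \<and> y = (\<Sum>g\<in>J. act (c g) (e g))) g0"

lemma phi_rep:
  assumes c: "\<forall>g\<in>J. c g \<in> Rg 0"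
  shows "phi (\<Sum>g\<in>J. act (c g) (e g)) = c g0"
proof -
  let ?y = "\<Sum>g\<in>J. act (c g) (e g)"
  let ?P = "\<lambda>c. (\<forall>g\<in>J. c g \<in> Rg 0) \<and> ?y = (\<Sum>g\<in>J. act (c g) (e g))"
  have "?P c" using c by auto
  then have P: "?P (SOME c. ?P c)" by (rule someI[of ?P c])
  define c' where "c' = (SOME c. ?P c)"
  have c': "\<forall>g\<in>J. c' g \<in> Rg 0" "?y = (\<Sum>g\<in>J. act (c' g) (e g))" using P unfolding c'_def by auto
  have "(\<Sum>g\<in>J. act (c g - c' g) (e g)) = ?y - (\<Sum>g\<in>J. act (c' g) (e g))"
    using c c'(1) kR by (simp add: act_diffl sum_subtractf)
  also have "\<dots> = 0" using c'(2) by simp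
  finally have "c g0 - c' g0 = 0" using indep[of "\<lambda>g. c g - c' g"] c c'(1) kdiff by auto
  then show ?thesis unfolding phi_def c'_def[symmetric] by simp
qed

definition "psi x = phi (dM x d)"

lemma span_d: "\<exists>a. (\<forall>g\<in>J. a g \<in> Rg 0) \<and> dM x d = (\<Sum>g\<in>J. act (a g) (e g))"
  using dM_in[of x d] J(1) unfolding PJ_def spanset_def by auto

lemma psi_add: "psi (x + y) = psi x + psi y"
proof -
  obtain a where a: "\<forall>g\<in>J. a g \<in> Rg 0" "dM x d = (\<Sum>g\<in>J. act (a g) (e g))" using span_d by blast
  obtain b where b: "\<forall>g\<in>J. b g \<in> Rg 0" "dM y d = (\<Sum>g\<in>J. act (b g) (e g))" using span_d by blast
  have "dM (x + y) d = (\<Sum>g\<in>J. act (a g + b g) (e g))"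
    unfolding dM_add a(2) b(2) using a(1) b(1) kR by (simp add: act_addl sum.distrib)
  then show ?thesis unfolding psi_def using a b phi_rep kadd by simp
qed

lemma psi_act: "r \<in> R \<Longrightarrow> psi (act r x) = rr r 0 * psi x"
proof -
  assume r: "r \<in> R"
  obtain a where a: "\<forall>g\<in>J. a g \<in> Rg 0" "dM x d = (\<Sum>g\<in>J. act (a g) (e g))" using span_d by blast
  have r0: "rr r 0 \<in> Rg 0" using rr_in[OF r] .
  have "dM (act r x) d = (\<Sum>g\<in>J. act (rr r 0 * a g) (e g))"
    unfolding dM_act_d[OF r] a(2) using r0 a(1) kR by (simp add: act_sumr act_mult)
  then show ?thesis unfolding psi_def using a phi_rep r0 kmult by simp
qed

definition "m0 = e g0"

lemma psi_m0: "psi m0 = 1"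
proof -
  have "dM m0 d = m0" unfolding m0_def by (rule dM_single[OF dM_in])
  also have "\<dots> = (\<Sum>g\<in>J. act (if g = g0 then 1 else 0) (e g))"
  proof -
    have "(\<lambda>g. act (if g = g0 then 1 else 0) (e g)) = (\<lambda>g. if g = g0 then e g else 0)"
      by (auto simp: act_one act_0 fun_eq_iff)
    then show ?thesis unfolding m0_def using g0 J_fin by (simp only: sum.delta) simp
  qed
  finally show ?thesis unfolding psi_def using phi_rep[of "\<lambda>g. if g = g0 then 1 else 0"] k1 k0
    by simp
qed

end


context setting begin

lemma dS_is: "s \<in> S \<Longrightarrow> is_decomp {q. q \<ge> 0} Sg s (dS s)" using dec_is[OF dsS] .
lemma dS_supp: "s \<in> S \<Longrightarrow> dS s q \<noteq> 0 \<Longrightarrow> q \<ge> 0" using dS_is unfolding is_decomp_def by auto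
lemma dS_fin: "s \<in> S \<Longrightarrow> finite {q. dS s q \<noteq> 0}" using dS_is unfolding is_decomp_def by auto

lemma Smult: "i \<ge> 0 \<Longrightarrow> j \<ge> 0 \<Longrightarrow> x \<in> Sg i \<Longrightarrow> y \<in> Sg j \<Longrightarrow> x * y \<in> Sg (i + j)"
proof -
  assume a: "i \<ge> 0" "j \<ge> 0" "x \<in> Sg i" "y \<in> Sg j"
  have "\<forall>i\<in>{q. q \<ge> 0}. \<forall>j\<in>{q. q \<ge> 0}. \<forall>x\<in>Sg i. \<forall>y\<in>Sg j. x * y \<in> Sg (i + j)"
    using grS unfolding graded_subring_def by blast
  then show ?thesis using a by blast
qed

lemma subS: "subring_of S" using grS unfolding graded_subring_def by auto
lemma Sadd: "x \<in> S \<Longrightarrow> y \<in> S \<Longrightarrow> x + y \<in> S" using subS unfolding subring_of_def by auto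
lemma Smul: "x \<in> S \<Longrightarrow> y \<in> S \<Longrightarrow> x * y \<in> S" using subS unfolding subring_of_def by auto
lemma S0: "0 \<in> S" using subS unfolding subring_of_def by auto
lemma SgS: "q \<ge> 0 \<Longrightarrow> Sg q \<subseteq> S" using dsS unfolding direct_sum_decomp_def by auto

lemma S_sum: "(\<And>i. i \<in> F \<Longrightarrow> c i \<in> S) \<Longrightarrow> sum c F \<in> S"
  by (induction F rule: infinite_finite_induct) (auto simp: S0 Sadd)

lemma RS_sub: "r \<in> R \<Longrightarrow> r \<in> S"
proof -
  assume r: "r \<in> R"
  have "rr r i \<in> S" for i
    using rr_in[OF r, of i] RS SgS[of "of_nat i"] by auto
  then show ?thesis using rr_sum[OF r] S_sum by metis
qed

definition "Tf f = (\<Sum>q\<in>{q. f q \<noteq> 0 \<and> q < (1::rat)}. (f q :: 'a))"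
definition "T s = Tf (dS s)"

lemma Tf_U:
  assumes "finite U" "{q. f q \<noteq> 0} \<subseteq> U"
  shows "Tf f = (\<Sum>q\<in>U \<inter> {q. q < 1}. f q)"
  unfolding Tf_def using assms by (intro sum.mono_neutral_left) auto

lemma T_add:
  assumes s: "s \<in> S" and t: "t \<in> S"
  shows "T (s + t) = T s + T t"
proof -
  have e: "dS (s + t) = (\<lambda>q. dS s q + dS t q)"
    by (rule dec_eq[OF dsS decomp_add[OF dsS dS_is[OF s] dS_is[OF t]]])
  let ?U = "{q. dS s q \<noteq> 0} \<union> {q. dS t q \<noteq> 0}"
  have fU: "finite ?U" using dS_fin s t by auto
  have "T (s + t) = (\<Sum>q\<in>?U \<inter> {q. q < 1}. dS s q + dS t q)"
    unfolding T_def e using fU by (intro Tf_U) auto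
  also have "\<dots> = T s + T t"
    unfolding T_def sum.distrib using fU by (subst (1 2) Tf_U[of ?U]) auto
  finally show ?thesis .
qed

lemma T_mult:
  assumes r: "r \<in> R" and s: "s \<in> S"
  shows "T (r * s) = rr r 0 * T s"
proof -
  let ?F = "{i. rr r i \<noteq> 0}"
  let ?f = "dS s"
  have fF: "finite ?F" using rr_fin[OF r] .
  have rs: "r * s = (\<Sum>i\<in>?F. rr r i * s)"
    using rr_sum[OF r] by (metis sum_distrib_right)
  have each: "is_decomp {q. q \<ge> 0} Sg (rr r i * s) (\<lambda>p. rr r i * ?f (p - of_nat i))" for i
  proof (rule decomp_shift[OF dsS dS_is[OF s]])
    show "rr r i * (u + v) = rr r i * u + rr r i * v" for u v by (simp add: distrib_left)
    show "rr r i * y \<in> Sg (j + of_nat i)" if "j \<in> {q. q \<ge> 0}" "y \<in> Sg j" for j :: rat and y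
    proof -
      have "rr r i \<in> Sg (of_nat i)" using rr_in[OF r, of i] RS by auto
      from Smult[OF _ _ this that(2)] that(1) show ?thesis by (simp add: add.commute)
    qed
    show "j + of_nat i \<in> {q. q \<ge> 0}" if "j \<in> {q. q \<ge> 0}" for j :: rat
      using that by simp
  qed
  have e: "dS (r * s) = (\<lambda>p. \<Sum>i\<in>?F. rr r i * ?f (p - of_nat i))"
    unfolding rs by (rule dec_eq[OF dsS decomp_sum[OF dsS fF each]])
  let ?U = "{q. ?f q \<noteq> 0} \<union> (\<Union>i\<in>?F. (\<lambda>q. q + of_nat i) ` {q. ?f q \<noteq> 0})"
  have fU: "finite ?U" using fF dS_fin[OF s] by auto
  have sub: "{p. (\<Sum>i\<in>?F. rr r i * ?f (p - of_nat i)) \<noteq> 0} \<subseteq> ?U"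
  proof
    fix p assume "p \<in> {p. (\<Sum>i\<in>?F. rr r i * ?f (p - of_nat i)) \<noteq> 0}"
    then obtain i where i: "i \<in> ?F" "?f (p - of_nat i) \<noteq> 0"
      by (metis (mono_tags, lifting) mem_Collect_eq mult_zero_right sum.neutral)
    then have "p \<in> (\<lambda>q. q + of_nat i) ` {q. ?f q \<noteq> 0}" by (intro image_eqI[of _ _ "p - of_nat i"]) auto
    then show "p \<in> ?U" using i(1) by blast
  qed
  have "T (r * s) = (\<Sum>p\<in>?U \<inter> {q. q < 1}. \<Sum>i\<in>?F. rr r i * ?f (p - of_nat i))"
    unfolding T_def e using fU sub by (intro Tf_U) auto
  also have "\<dots> = (\<Sum>i\<in>?F. \<Sum>p\<in>?U \<inter> {q. q < 1}. rr r i * ?f (p - of_nat i))"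
    by (rule sum.swap)
  also have "\<dots> = (\<Sum>i\<in>?F. if i = 0 then rr r 0 * T s else 0)"
  proof (rule sum.cong[OF refl])
    fix i assume "i \<in> ?F"
    show "(\<Sum>p\<in>?U \<inter> {q. q < 1}. rr r i * ?f (p - of_nat i)) = (if i = 0 then rr r 0 * T s else 0)"
    proof (cases "i = 0")
      case True
      have "T s = (\<Sum>p\<in>?U \<inter> {q. q < 1}. ?f p)" unfolding T_def using fU by (intro Tf_U) auto
      then show ?thesis using True by (simp add: sum_distrib_left)
    next
      case False
      have "rr r i * ?f (p - of_nat i) = 0" if "p \<in> ?U \<inter> {q. q < 1}" for p
      proof (rule ccontr)
        assume "rr r i * ?f (p - of_nat i) \<noteq> 0"
        then have "?f (p - of_nat i) \<noteq> 0" by auto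
        then have "p - of_nat i \<ge> 0" using dS_supp[OF s] by blast
        moreover have "(of_nat i :: rat) \<ge> 1" using False by simp
        ultimately show False using that by simp
      qed
      then have "(\<Sum>p\<in>?U \<inter> {q. q < 1}. rr r i * ?f (p - of_nat i)) = 0"
        by (intro sum.neutral) blast
      then show ?thesis using False by simp
    qed
  qed
  also have "\<dots> = rr r 0 * T s" by (simp add: sum.delta[OF fF])
  finally show ?thesis .
qed

lemma T_nz:
  assumes a: "a \<in> S" "a \<noteq> 0" and nu: "nu Sg a < 1"
  shows "T a \<noteq> 0"
proof
  assume T0: "T a = 0"
  let ?f = "dS a"
  let ?Q = "{q. q \<ge> 0 \<and> ?f q \<noteq> 0}"
  have nu_eq: "nu Sg a = Min ?Q" unfolding nu_def dec_def by simp
  have fQ: "finite ?Q" using dS_fin[OF a(1)] by (auto intro: finite_subset)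
  have neQ: "?Q \<noteq> {}"
  proof
    assume "?Q = {}"
    then have "{q. ?f q \<noteq> 0} = {}" using dS_supp[OF a(1)] by blast
    then show False using dS_is[OF a(1)] a(2) unfolding is_decomp_def by simp
  qed
  define q0 where "q0 = Min ?Q"
  have q0: "q0 \<ge> 0" "?f q0 \<noteq> 0" "q0 < 1" using Min_in[OF fQ neQ] nu nu_eq unfolding q0_def by auto
  define g where "g q = (if q < 1 then ?f q else 0)" for q
  have supp_g: "{q. g q \<noteq> 0} = {q. ?f q \<noteq> 0 \<and> q < 1}" unfolding g_def by auto
  have "is_decomp {q. q \<ge> 0} Sg (T a) g"
    unfolding is_decomp_def
  proof (intro conjI allI impI ballI)
    show "finite {q. g q \<noteq> 0}" unfolding supp_g using dS_fin[OF a(1)] by (auto intro: finite_subset)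
    show "q \<in> {q. q \<ge> 0}" if "g q \<noteq> 0" for q using that dS_supp[OF a(1)] unfolding g_def
      by (auto split: if_splits)
    show "g q \<in> Sg q" if "q \<in> {q. q \<ge> 0}" for q
      using dS_is[OF a(1)] that dsS unfolding g_def is_decomp_def direct_sum_decomp_def by auto
    show "T a = (\<Sum>q\<in>{q. g q \<noteq> 0}. g q)" unfolding supp_g T_def Tf_def
      by (intro sum.cong) (auto simp: g_def)
  qed
  then have "is_decomp {q. q \<ge> 0} Sg 0 g" using T0 by simp
  moreover have "is_decomp {q. q \<ge> 0} Sg 0 (\<lambda>_. 0)" by (rule decomp_zero[OF dsS])
  ultimately have "g = (\<lambda>_. 0)" using dsS unfolding direct_sum_decomp_def by blast
  then have "g q0 = 0" by simp
  then show False using q0 unfolding g_def by simp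
qed

definition "w p = psi (fst p) * T (snd p)"
definition "Phi (u :: ('m \<times> 'a) \<Rightarrow>\<^sub>0 int) = (\<Sum>p\<in>Poly_Mapping.keys u. of_int (Poly_Mapping.lookup u p) * w p)"

lemma Phi_U: "finite U \<Longrightarrow> Poly_Mapping.keys u \<subseteq> U \<Longrightarrow> Phi u = (\<Sum>p\<in>U. of_int (Poly_Mapping.lookup u p) * w p)"
  unfolding Phi_def by (intro sum.mono_neutral_left) (auto simp: in_keys_iff)

lemma Phi_add: "Phi (u + v) = Phi u + Phi v"
proof -
  let ?U = "Poly_Mapping.keys u \<union> Poly_Mapping.keys v"
  have "Phi (u + v) = (\<Sum>p\<in>?U. of_int (Poly_Mapping.lookup (u + v) p) * w p)"
    using keys_add[of u v] by (intro Phi_U) auto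
  also have "\<dots> = (\<Sum>p\<in>?U. of_int (Poly_Mapping.lookup u p) * w p) + (\<Sum>p\<in>?U. of_int (Poly_Mapping.lookup v p) * w p)"
    by (simp add: lookup_add distrib_right sum.distrib)
  also have "\<dots> = Phi u + Phi v" by (subst (1 2) Phi_U[of ?U]) auto
  finally show ?thesis .
qed

lemma Phi_neg: "Phi (- u) = - Phi u"
proof -
  have "Poly_Mapping.keys (- u) \<subseteq> Poly_Mapping.keys u" by (auto simp: in_keys_iff)
  then have "Phi (- u) = (\<Sum>p\<in>Poly_Mapping.keys u. of_int (Poly_Mapping.lookup (- u) p) * w p)" by (intro Phi_U) auto
  then show ?thesis unfolding Phi_def by (simp add: sum_negf)
qed

lemma Phi_diff: "Phi (u - v) = Phi u - Phi v"
  using Phi_add[of u "- v"] Phi_neg[of v] by simp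

lemma Phi_single: "Phi (Poly_Mapping.single p 1) = w p"
  unfolding Phi_def by simp

lemma Phi_rel: "u \<in> tensor_rel R S act \<Longrightarrow> Phi u = 0"
proof (induction rule: tensor_rel.induct)
  case zero then show ?case unfolding Phi_def by simp
next
  case (add u v) then show ?case by (simp add: Phi_add)
next
  case (neg u) then show ?case by (simp add: Phi_neg)
next
  case (addl s x y) then show ?case by (simp add: Phi_diff Phi_single w_def psi_add distrib_right)
next
  case (addr s t x) then show ?case by (simp add: Phi_diff Phi_single w_def T_add distrib_left)
next
  case (scal r s x) then show ?case by (simp add: Phi_diff Phi_single w_def psi_act T_mult)
qed

lemma main: "\<not> almost_zero R S Sg act m0"
proof
  assume "almost_zero R S Sg act m0"
  then obtain a where a: "a \<in> S" "a \<noteq> 0" "nu Sg a < 1"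
    "Poly_Mapping.single (m0, a) 1 \<in> tensor_rel R S act"
    unfolding almost_zero_def by (meson zero_less_one)
  have "Phi (Poly_Mapping.single (m0, a) 1) = T a" by (simp add: Phi_single w_def psi_m0)
  then show False using Phi_rel[OF a(4)] T_nz[OF a(1-3)] by simp
qed

end

theorem proposition2p11:
  fixes R :: "'a::field set" and Rg :: "nat \<Rightarrow> 'a set"
    and S :: "'a set" and Sg :: "rat \<Rightarrow> 'a set"
    and act :: "'a \<Rightarrow> 'm::ab_group_add \<Rightarrow> 'm" and Mg :: "int \<Rightarrow> 'm set"
  assumes "fg_graded_domain R Rg"
    and "is_alg_closure_of_frac R"
    and "is_RplusGR R Rg S Sg"
    and "fg_module R act"
    and "Zgraded_module Rg act Mg"
    and "\<exists>m::'m. m \<noteq> 0"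
  shows "\<exists>m::'m. \<not> almost_zero R S Sg act m"
proof -
  interpret setting R Rg S Sg act Mg
  proof
    show "graded_subring UNIV R Rg" "\<forall>x\<in>Rg 0. x \<noteq> 0 \<longrightarrow> inverse x \<in> Rg 0"
      using assms(1) unfolding fg_graded_domain_def by auto
    show "graded_subring {q. q \<ge> 0} S Sg" "\<forall>n. Rg n \<subseteq> Sg (of_nat n)"
      using assms(3) unfolding is_RplusGR_def qgraded_ext_def by auto
    show "is_module R act"
      "\<exists>G. finite G \<and> (\<forall>x. \<exists>c. (\<forall>g\<in>G. c g \<in> R) \<and> x = (\<Sum>g\<in>G. act (c g) g))"
      using assms(4) unfolding fg_module_def by auto
    show "Zgraded_module Rg act Mg" by (rule assms(5))
    show "\<exists>m::'m. m \<noteq> 0" by (rule assms(6))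
  qed
  show ?thesis using main by blast
qed

end
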